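(* For $k\ge 1$ let $G_k=(V_k,E_k)$ be the graph with vertex set $V_k=\{v_0,\ldots,v_{4k}\}$ (so $|V_k|=4k+1$), specified vertex $a=v_0$, and edge set $E_k=\{(v_0,v_1),(v_0,v_2)\}\cup\bigcup_{i=0}^{k-1}\{(v_{4i+1},v_{4i+2}),(v_{4i+2},v_{4i+3}),(v_{4i+3},v_{4i+4}),(v_{4i+4},v_{4i+1})\}\cup\bigcup_{i=0}^{k-2}\{(v_{4i+4},v_{4i+5}),(v_{4i+3},v_{4i+6})\}$. Let $T_k^A$ be the spanning tree of $G_k$ with edge set $\{e_0,\ldots,e_{4k-1}\}$ where $e_i=(v_i,v_{i+1})$, and let $T_k^B$ be the spanning tree with edge set $\{(v_0,v_1),(v_0,v_2)\}\cup\bigcup_{i=0}^{k-1}\{(v_{4i+1},v_{4i+4}),(v_{4i+2},v_{4i+3})\}\cup\bigcup_{i=0}^{k-2}\{(v_{4i+4},v_{4i+5}),(v_{4i+3},v_{4i+6})\}$. Let $T_1,\ldots,T_\ell$ be a shortest sequence of spanning trees of $G_k$ with $T_1=T_k^A$ and $T_\ell=T_k^B$ such that every pair of consecutive trees are adjacent (with respect to $a=v_0$). Then $\ell=\Omega(|V_k|^2)$, i.e., there is an absolute constant $c>0$ such that $\ell\ge c\,(4k+1)^2$ for all $k\ge1$.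
   Context: Given a connected graph $G=(V,E)$ with $n\ge 2$ vertices and a specified vertex $a\in V$, two spanning trees of $G$ are called adjacent if their intersection (the subgraph consisting of the edges common to both) contains a tree on $n-1$ vertices that includes $a$. *)

theory Defs
  imports Complex_Main
begin

definition reach :: "'v set set \<Rightarrow> 'v \<Rightarrow> 'v \<Rightarrow> bool" where
  "reach F u v \<longleftrightarrow> (\<lambda>x y. {x, y} \<in> F)\<^sup>*\<^sup>* u v"

definition is_graph :: "'v set \<Rightarrow> 'v set set \<Rightarrow> bool" where
  "is_graph W F \<longleftrightarrow> finite W \<and> (\<forall>e\<in>F. e \<subseteq> W \<and> card e = 2)"

definition connected_on :: "'v set \<Rightarrow> 'v set set \<Rightarrow> bool" where
  "connected_on W F \<longleftrightarrow> W \<noteq> {} \<and> (\<forall>u\<in>W. \<forall>v\<in>W. reach F u v)"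

definition acyclic_edges :: "'v set set \<Rightarrow> bool" where
  "acyclic_edges F \<longleftrightarrow> (\<forall>u v. {u, v} \<in> F \<and> u \<noteq> v \<longrightarrow> \<not> reach (F - {{u, v}}) u v)"

definition is_tree :: "'v set \<Rightarrow> 'v set set \<Rightarrow> bool" where
  "is_tree W F \<longleftrightarrow> is_graph W F \<and> connected_on W F \<and> acyclic_edges F"

definition spanning_tree :: "'v set \<Rightarrow> 'v set set \<Rightarrow> 'v set set \<Rightarrow> bool" where
  "spanning_tree V E T \<longleftrightarrow> T \<subseteq> E \<and> is_tree V T"

definition adjacent_trees :: "'v set \<Rightarrow> 'v \<Rightarrow> 'v set set \<Rightarrow> 'v set set \<Rightarrow> bool" where
  "adjacent_trees V a T1 T2 \<longleftrightarrow>
     (\<exists>W F. W \<subseteq> V \<and> card W = card V - 1 \<and> a \<in> W \<and> F \<subseteq> T1 \<inter> T2 \<and> is_tree W F)"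

definition Vk :: "nat \<Rightarrow> nat set" where
  "Vk k = {0..4*k}"

definition Ek :: "nat \<Rightarrow> nat set set" where
  "Ek k = {{0,1},{0,2}}
     \<union> (\<Union>i\<in>{..<k}. {{4*i+1,4*i+2},{4*i+2,4*i+3},{4*i+3,4*i+4},{4*i+4,4*i+1}})
     \<union> (\<Union>i\<in>{i. i + 1 < k}. {{4*i+4,4*i+5},{4*i+3,4*i+6}})"

definition TA :: "nat \<Rightarrow> nat set set" where
  "TA k = {{i, i+1} | i. i < 4*k}"

definition TB :: "nat \<Rightarrow> nat set set" where
  "TB k = {{0,1},{0,2}}
     \<union> (\<Union>i\<in>{..<k}. {{4*i+1,4*i+4},{4*i+2,4*i+3}})
     \<union> (\<Union>i\<in>{i. i + 1 < k}. {{4*i+4,4*i+5},{4*i+3,4*i+6}})"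

definition reconf_seq :: "nat \<Rightarrow> nat set set list \<Rightarrow> bool" where
  "reconf_seq k Ts \<longleftrightarrow> Ts \<noteq> [] \<and> hd Ts = TA k \<and> last Ts = TB k
     \<and> (\<forall>T\<in>set Ts. spanning_tree (Vk k) (Ek k) T)
     \<and> (\<forall>i. Suc i < length Ts \<longrightarrow> adjacent_trees (Vk k) 0 (Ts ! i) (Ts ! Suc i))"

end

theory Submission
  imports Defs
begin

lemma reach_refl[simp]: "reach F a a"
  by (simp add: reach_def)

lemma reach_edge: "{a,b} \<in> F \<Longrightarrow> reach F a b"
  by (simp add: reach_def r_into_rtranclp)

lemma reach_trans: "reach F a b \<Longrightarrow> reach F b c \<Longrightarrow> reach F a c"
  unfolding reach_def by (rule rtranclp_trans)

lemma reach_step: "reach F a b \<Longrightarrow> {b,c} \<in> F \<Longrightarrow> reach F a c"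
  unfolding reach_def by (rule rtranclp.rtrancl_into_rtrancl)

lemma reach_mono: "reach F a b \<Longrightarrow> F \<subseteq> G \<Longrightarrow> reach G a b"
  unfolding reach_def by (erule rtranclp_mono[THEN predicate2D, rotated]) auto

lemma reach_sym: "reach F a b \<Longrightarrow> reach F b a"
  unfolding reach_def
proof (induction rule: rtranclp_induct)
  case base then show ?case by simp
next
  case (step y z)
  then have "{z,y} \<in> F" by (simp add: insert_commute)
  then show ?case using step by (meson converse_rtranclp_into_rtranclp)
qed

lemma reach_cases: "reach F a b \<Longrightarrow> a = b \<or> (\<exists>z. reach F a z \<and> {z,b} \<in> F)"
  unfolding reach_def by (erule rtranclp.cases) auto

lemma reach_split:
  assumes "reach F x y"
  shows "reach (F - {f}) x y \<or> (\<exists>s1 s2. f = {s1,s2} \<and> reach (F - {f}) x s1 \<and> reach (F - {f}) s2 y)"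
  using assms unfolding reach_def
proof (induction rule: rtranclp_induct)
  case base then show ?case by simp
next
  case (step z c)
  show ?case
  proof (cases "{z,c} = f")
    case False
    then have e: "{z,c} \<in> F - {f}" using step by simp
    from step.IH show ?thesis
    proof
      assume "(\<lambda>x y. {x, y} \<in> F - {f})\<^sup>*\<^sup>* x z"
      then show ?thesis using e by (meson rtranclp.rtrancl_into_rtrancl)
    next
      assume "\<exists>s1 s2. f = {s1, s2} \<and> (\<lambda>x y. {x, y} \<in> F - {f})\<^sup>*\<^sup>* x s1 \<and> (\<lambda>x y. {x, y} \<in> F - {f})\<^sup>*\<^sup>* s2 z"
      then obtain s1 s2 where "f = {s1, s2}" "(\<lambda>x y. {x, y} \<in> F - {f})\<^sup>*\<^sup>* x s1" "(\<lambda>x y. {x, y} \<in> F - {f})\<^sup>*\<^sup>* s2 z" by blast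
      moreover then have "(\<lambda>x y. {x, y} \<in> F - {f})\<^sup>*\<^sup>* s2 c" using e by (meson rtranclp.rtrancl_into_rtrancl)
      ultimately show ?thesis by blast
    qed
  next
    case True
    from step.IH show ?thesis
    proof
      assume "(\<lambda>x y. {x, y} \<in> F - {f})\<^sup>*\<^sup>* x z"
      then show ?thesis using True by blast
    next
      assume "\<exists>s1 s2. f = {s1, s2} \<and> (\<lambda>x y. {x, y} \<in> F - {f})\<^sup>*\<^sup>* x s1 \<and> (\<lambda>x y. {x, y} \<in> F - {f})\<^sup>*\<^sup>* s2 z"
      then obtain s1 s2 where s: "f = {s1,s2}" "(\<lambda>x y. {x, y} \<in> F - {f})\<^sup>*\<^sup>* x s1" by blast
      then have "s1 = c \<or> s1 = z" using True by (auto simp: doubleton_eq_iff)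
      then show ?thesis
      proof
        assume "s1 = c" then show ?thesis using s by simp
      next
        assume "s1 = z"
        then have "f = {s1, c}" using True by simp
        then show ?thesis using s by blast
      qed
    qed
  qed
qed

lemma reach_pendant:
  assumes nv: "\<forall>e\<in>F. v \<notin> e" and sv: "s \<noteq> v"
  shows "reach (insert {v,x} F) s w \<longleftrightarrow> (if w = v then reach F s x else reach F s w)"
proof
  assume "reach (insert {v,x} F) s w"
  then have "(w \<noteq> v \<longrightarrow> reach F s w) \<and> (w = v \<longrightarrow> reach F s x)"
    unfolding reach_def
  proof (induction rule: rtranclp_induct)
    case base then show ?case using sv by simp
  next
    case (step z c)
    show ?case
    proof (cases "{z,c} = {v,x}")
      case True
      then show ?thesis using step by (auto simp: doubleton_eq_iff)
    next
      case False
      then have "{z,c} \<in> F" using step by simp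
      then have "z \<noteq> v" "c \<noteq> v" using nv by auto
      then show ?thesis using step \<open>{z,c} \<in> F\<close> by (meson rtranclp.rtrancl_into_rtrancl)
    qed
  qed
  then show "(if w = v then reach F s x else reach F s w)" by simp
next
  assume h: "(if w = v then reach F s x else reach F s w)"
  show "reach (insert {v,x} F) s w"
  proof (cases "w = v")
    case True
    then have "reach (insert {v,x} F) s x" using h reach_mono[of F s x] by auto
    moreover have "{x,w} \<in> insert {v,x} F" using True by (simp add: insert_commute)
    ultimately show ?thesis by (rule reach_step)
  next
    case False then show ?thesis using h reach_mono[of F s w] by auto
  qed
qed

definition pos :: "nat \<Rightarrow> nat" where "pos j = (j+1) div 2"
definition rung :: "nat \<Rightarrow> nat set" where "rung m = {2*m-1, 2*m}"

lemma Ek_edge_pos: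
  assumes "{z,c} \<in> Ek k"
  shows "pos z \<le> pos c + 1 \<and> pos c \<le> pos z + 1"
  using assms unfolding Ek_def pos_def
  by (auto simp: doubleton_eq_iff)

lemma reach_Ek_pos:
  assumes "reach E a b" "E \<subseteq> Ek k"
    and "(pos a \<le> m \<and> m \<le> pos b) \<or> (pos b \<le> m \<and> m \<le> pos a)"
  shows "\<exists>z. pos z = m \<and> reach E a z \<and> reach E z b"
  using assms unfolding reach_def
proof (induction arbitrary: m rule: rtranclp_induct)
  case base then show ?case by auto
next
  case (step b c)
  have ec: "{b,c} \<in> Ek k" using step by auto
  have pb: "pos b \<le> pos c + 1 \<and> pos c \<le> pos b + 1" using Ek_edge_pos[OF ec] .
  show ?case
  proof (cases "(pos a \<le> m \<and> m \<le> pos b) \<or> (pos b \<le> m \<and> m \<le> pos a)")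
    case True
    then obtain z where "pos z = m" "(\<lambda>x y. {x, y} \<in> E)\<^sup>*\<^sup>* a z" "(\<lambda>x y. {x, y} \<in> E)\<^sup>*\<^sup>* z b"
      using step by blast
    moreover have "(\<lambda>x y. {x, y} \<in> E)\<^sup>*\<^sup>* z c" using calculation(3) step(2) by (meson rtranclp.rtrancl_into_rtrancl)
    ultimately show ?thesis by blast
  next
    case False
    then have "m = pos c" using step(5) pb by linarith
    moreover have "(\<lambda>x y. {x, y} \<in> E)\<^sup>*\<^sup>* a c" using step(1,2) by (meson rtranclp.rtrancl_into_rtrancl)
    ultimately show ?thesis by blast
  qed
qed

lemma pos_eq_rung: "pos z = p \<Longrightarrow> 1 \<le> p \<Longrightarrow> z \<in> rung p"
  unfolding pos_def rung_def by auto

lemma rung_pos: "z \<in> rung p \<Longrightarrow> 1 \<le> p \<Longrightarrow> pos z = p"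
  unfolding pos_def rung_def by auto

lemma sep_contra:
  assumes xy: "reach F x y" and E: "F \<subseteq> Ek k"
    and rp: "rung p \<in> F" and rp': "rung p' \<in> F"
    and ns: "\<not> reach (F - {rung p'}) x y"
    and p1: "1 \<le> p" and p1': "1 \<le> p'" and pp: "p \<noteq> p'"
    and lv: "(pos x < p \<and> pos y < p \<and> p < p') \<or> (p' < p \<and> p < pos x \<and> p < pos y)"
  shows False
proof -
  let ?G = "F - {rung p'}"
  have EG: "?G \<subseteq> Ek k" using E by auto
  from reach_split[OF xy, of "rung p'"] ns obtain s1 s2 where
    s: "rung p' = {s1,s2}" "reach ?G x s1" "reach ?G s2 y" by blast
  have ps1: "pos s1 = p'" and ps2: "pos s2 = p'" using s(1) rung_pos[OF _ p1'] by auto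
  obtain z where z: "pos z = p" "reach ?G x z"
    using reach_Ek_pos[OF s(2) EG, of p] lv ps1 by auto
  obtain z' where z': "pos z' = p" "reach ?G z' y"
    using reach_Ek_pos[OF s(3) EG, of p] lv ps2 by auto
  show False
  proof (cases "z = z'")
    case True
    then show False using z z' ns reach_trans by metis
  next
    case False
    have "z \<in> rung p" "z' \<in> rung p" using pos_eq_rung[OF z(1) p1] pos_eq_rung[OF z'(1) p1] by auto
    then have "rung p = {z,z'}" using False unfolding rung_def by auto
    moreover have "rung p \<noteq> rung p'" using pp p1 p1' unfolding rung_def by (auto simp: doubleton_eq_iff)
    ultimately have "{z,z'} \<in> ?G" using rp by auto
    then have "reach ?G z z'" by (rule reach_edge)
    then show False using z z' ns reach_trans by metis
  qed
qed

lemma leaf_struct: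
  assumes T: "is_tree V T" and FT: "F \<subseteq> T" and con: "\<forall>u\<in>W. \<forall>w\<in>W. reach F u w"
    and W: "W = V - {v}" and vV: "v \<in> V" and a: "a \<in> W" and nv: "\<forall>e\<in>F. v \<notin> e"
  shows "\<exists>x. x \<in> W \<and> T = insert {v,x} F"
proof -
  have gr: "\<forall>e\<in>T. e \<subseteq> V \<and> card e = 2" using T unfolding is_tree_def is_graph_def by auto
  have ac: "\<And>u w. {u,w} \<in> T \<Longrightarrow> u \<noteq> w \<Longrightarrow> \<not> reach (T - {{u,w}}) u w"
    using T unfolding is_tree_def acyclic_edges_def by blast
  have "reach T a v" using T a vV W unfolding is_tree_def connected_on_def by auto
  moreover have "a \<noteq> v" using a W by auto
  ultimately obtain x where xe: "{x,v} \<in> T" using reach_cases by metis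
  then have "{v,x} \<in> T" by (simp add: insert_commute)
  then have "{v,x} \<subseteq> V" "card {v,x} = 2" using gr by auto
  then have xW: "x \<in> W" using W by (auto split: if_splits)
  have vx: "x \<noteq> v" using xW W by auto
  have main: "e = {v,x}" if eT: "e \<in> T" and eF: "e \<notin> F" for e
  proof -
    have "e \<subseteq> V" "card e = 2" using gr eT by auto
    then obtain s t where st: "e = {s,t}" "s \<noteq> t" "s \<in> V" "t \<in> V" by (auto simp: card_2_iff)
    have FT': "F \<subseteq> T - {e}" using FT eF by auto
    show ?thesis
    proof (cases "v \<in> e")
      case False
      then have "s \<in> W" "t \<in> W" using st W by auto
      then have "reach F s t" using con by auto
      then have "reach (T - {{s,t}}) s t" using FT' st reach_mono by metis
      then show ?thesis using ac st eT by auto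
    next
      case True
      then obtain t' where t': "e = {v,t'}" "t' \<noteq> v" "t' \<in> W" using st W by auto
      show ?thesis
      proof (rule ccontr)
        assume ne: "e \<noteq> {v,x}"
        then have "t' \<noteq> x" using t' by auto
        have "reach F x t'" using con xW t' by auto
        then have r1: "reach (T - {e}) x t'" using FT' reach_mono by metis
        have "{v,x} \<in> T - {e}" using \<open>{v,x} \<in> T\<close> ne by auto
        then have "reach (T - {e}) v x" by (rule reach_edge)
        then have "reach (T - {{v,t'}}) v t'" using r1 reach_trans t'(1) by metis
        then show False using ac t' eT by auto
      qed
    qed
  qed
  have "T = insert {v,x} F" using main FT \<open>{v,x} \<in> T\<close> by blast
  then show ?thesis using xW by blast
qed

lemma adj_struct:
  assumes T1: "spanning_tree V E T1" and T2: "spanning_tree V E T2"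
    and adj: "adjacent_trees V 0 T1 T2"
  shows "\<exists>v x y F. v \<in> V \<and> v \<noteq> 0 \<and> F \<subseteq> T1 \<and> (\<forall>e\<in>F. v \<notin> e)
     \<and> (\<forall>u\<in>V - {v}. \<forall>w\<in>V - {v}. reach F u w)
     \<and> x \<in> V - {v} \<and> y \<in> V - {v} \<and> T1 = insert {v,x} F \<and> T2 = insert {v,y} F"
proof -
  obtain W F where WF: "W \<subseteq> V" "card W = card V - 1" "0 \<in> W" "F \<subseteq> T1 \<inter> T2" "is_tree W F"
    using adj unfolding adjacent_trees_def by blast
  have t1: "is_tree V T1" and t2: "is_tree V T2" using T1 T2 unfolding spanning_tree_def by auto
  have fin: "finite V" and ne: "V \<noteq> {}" using t1 unfolding is_tree_def is_graph_def connected_on_def by auto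
  have "card V \<ge> 1" using fin ne by (simp add: Suc_le_eq card_gt_0_iff)
  have "card (V - W) = card V - card W" using WF(1) fin by (meson card_Diff_subset finite_subset)
  then have "card (V - W) = 1" using WF(2) \<open>card V \<ge> 1\<close> by simp
  then obtain v where v: "V - W = {v}" by (auto simp: card_1_singleton_iff)
  have W: "W = V - {v}" using v WF(1) by auto
  have vV: "v \<in> V" using v by auto
  have v0: "v \<noteq> 0" using W WF(3) by auto
  have nv: "\<forall>e\<in>F. v \<notin> e" using WF(5) W unfolding is_tree_def is_graph_def by auto
  have con: "\<forall>u\<in>W. \<forall>w\<in>W. reach F u w" using WF(5) unfolding is_tree_def connected_on_def by auto
  obtain x where x: "x \<in> W" "T1 = insert {v,x} F"
    using leaf_struct[OF t1 _ con W vV WF(3) nv] WF(4) by auto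
  obtain y where y: "y \<in> W" "T2 = insert {v,y} F"
    using leaf_struct[OF t2 _ con W vV WF(3) nv] WF(4) by auto
  show ?thesis using vV v0 WF(4) nv con x y W by blast
qed

definition tm :: "nat \<Rightarrow> nat set set \<Rightarrow> nat \<Rightarrow> nat" where
  "tm k T m = (if rung m \<in> T then card {w \<in> Vk k. \<not> reach (T - {rung m}) 0 w} else 0)"

definition Phi :: "nat \<Rightarrow> nat set set \<Rightarrow> nat" where
  "Phi k T = (\<Sum>m\<in>{1..2*k}. tm k T m)"

lemma card_pendant:
  assumes nv: "\<forall>e\<in>F'. v \<notin> e" and v0: "0 \<noteq> v" and vV: "v \<in> V" and fin: "finite V"
  shows "card {w \<in> V. \<not> reach (insert {v,x} F') 0 w}
       = card {w \<in> V - {v}. \<not> reach F' 0 w} + (if reach F' 0 x then 0 else 1)"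
proof -
  have eq: "{w \<in> V. \<not> reach (insert {v,x} F') 0 w}
     = {w \<in> V - {v}. \<not> reach F' 0 w} \<union> (if reach F' 0 x then {} else {v})"
    using reach_pendant[OF nv v0] vV by auto
  have "finite {w \<in> V - {v}. \<not> reach F' 0 w}" using fin by auto
  then show ?thesis unfolding eq by (auto simp: card_Un_disjoint)
qed

lemma finite_Vk: "finite (Vk k)" by (simp add: Vk_def)

lemma step_bound:
  assumes T1: "spanning_tree (Vk k) (Ek k) T1" and T2: "spanning_tree (Vk k) (Ek k) T2"
    and adj: "adjacent_trees (Vk k) 0 T1 T2"
  shows "Phi k T1 \<le> Phi k T2 + 5"
proof -
  let ?V = "Vk k"
  obtain v x y F where st: "v \<in> ?V" "v \<noteq> 0" "F \<subseteq> T1" "\<forall>e\<in>F. v \<notin> e"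
     "\<forall>u\<in>?V - {v}. \<forall>w\<in>?V - {v}. reach F u w"
     "x \<in> ?V - {v}" "y \<in> ?V - {v}" "T1 = insert {v,x} F" "T2 = insert {v,y} F"
    using adj_struct[OF T1 T2 adj] by blast
  have T1E: "T1 \<subseteq> Ek k" "T2 \<subseteq> Ek k" using T1 T2 unfolding spanning_tree_def by auto
  have FE: "F \<subseteq> Ek k" using st(3) T1E by auto
  have "{v,x} \<in> Ek k" "{v,y} \<in> Ek k" using T1E st(8,9) by auto
  then have px: "pos x \<le> pos v + 1" "pos v \<le> pos x + 1" and py: "pos y \<le> pos v + 1" "pos v \<le> pos y + 1"
    using Ek_edge_pos by blast+
  have 0: "0 \<in> ?V - {v}" using st(2) by (simp add: Vk_def)
  have rxy: "reach F x y" using st(5,6,7) by auto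
  define lo where "lo = pos v - 1"
  define hi where "hi = pos v + 1"
  define sep where "sep m \<longleftrightarrow> rung m \<in> F \<and> \<not> reach (F - {rung m}) x y" for m
  define D1 where "D1 = {m \<in> {1..2*k}. lo \<le> m \<and> m \<le> hi}"
  define D2 where "D2 = {m \<in> {1..2*k}. hi < m \<and> sep m}"
  define D3 where "D3 = {m \<in> {1..2*k}. m < lo \<and> sep m}"
  define D where "D = D1 \<union> D2 \<union> D3"
  have nvr: "\<forall>e\<in>F - {rung m}. v \<notin> e" for m using st(4) by auto
  have per: "tm k T1 m \<le> tm k T2 m + (if m \<in> D then 1 else 0)" if m: "m \<in> {1..2*k}" for m
  proof (cases "rung m \<in> F")
    case True
    have ne1: "{v,x} \<noteq> rung m" "{v,y} \<noteq> rung m" using True st(4) by auto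
    have e1: "T1 - {rung m} = insert {v,x} (F - {rung m})" using st(8) ne1 by auto
    have e2: "T2 - {rung m} = insert {v,y} (F - {rung m})" using st(9) ne1 by auto
    have t1: "tm k T1 m = card {w \<in> ?V - {v}. \<not> reach (F - {rung m}) 0 w} + (if reach (F - {rung m}) 0 x then 0 else 1)"
      unfolding tm_def using True st(8) e1 card_pendant[OF nvr _ st(1) finite_Vk] st(2) by auto
    have t2: "tm k T2 m = card {w \<in> ?V - {v}. \<not> reach (F - {rung m}) 0 w} + (if reach (F - {rung m}) 0 y then 0 else 1)"
      unfolding tm_def using True st(9) e2 card_pendant[OF nvr _ st(1) finite_Vk] st(2) by auto
    show ?thesis
    proof (cases "\<not> reach (F - {rung m}) 0 x \<and> reach (F - {rung m}) 0 y")
      case False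
      then show ?thesis using t1 t2 by auto
    next
      case c: True
      have "\<not> reach (F - {rung m}) x y" using c reach_trans reach_sym by metis
      then have "sep m" using True sep_def by auto
      then have "m \<in> D" using m unfolding D_def D1_def D2_def D3_def by auto
      then show ?thesis using t1 t2 by auto
    qed
  next
    case False
    have le1: "tm k T1 m \<le> 1"
    proof (cases "rung m \<in> T1")
      case True
      then have r: "rung m = {v,x}" using st(8) False by auto
      have "{v,x} \<notin> F" using st(4) by auto
      then have "T1 - {rung m} = F" using st(8) r by auto
      moreover have "{w \<in> ?V. \<not> reach F 0 w} \<subseteq> {v}"
      proof
        fix w assume "w \<in> {w \<in> ?V. \<not> reach F 0 w}"
        then have "w \<in> ?V" "\<not> reach F 0 w" by auto
        then show "w \<in> {v}" using st(5) 0 by blast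
      qed
      then have "card {w \<in> ?V. \<not> reach F 0 w} \<le> card {v}" by (intro card_mono) auto
      ultimately show ?thesis unfolding tm_def using True by simp
    next
      case False then show ?thesis unfolding tm_def by simp
    qed
    show ?thesis
    proof (cases "tm k T1 m = 0")
      case True then show ?thesis by simp
    next
      case nz: False
      then have "rung m \<in> T1" unfolding tm_def by (auto split: if_splits)
      then have "rung m = {v,x}" using st(8) False by auto
      then have "v \<in> rung m" by auto
      then have "pos v = m" using rung_pos m by auto
      then have "m \<in> D" using m unfolding D_def D1_def lo_def hi_def by auto
      then show ?thesis using le1 by auto
    qed
  qed
  have "Phi k T1 \<le> (\<Sum>m\<in>{1..2*k}. tm k T2 m + (if m \<in> D then 1 else 0))"
    unfolding Phi_def by (rule sum_mono) (use per in auto)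
  also have "\<dots> = Phi k T2 + card ({1..2*k} \<inter> D)"
    unfolding Phi_def by (simp add: sum.distrib sum.If_cases)
  finally have P: "Phi k T1 \<le> Phi k T2 + card ({1..2*k} \<inter> D)" .
  have c1: "card D1 \<le> 3"
  proof -
    have "D1 \<subseteq> {lo..hi}" unfolding D1_def by auto
    then have "card D1 \<le> card {lo..hi}" by (intro card_mono) auto
    also have "\<dots> \<le> 3" unfolding lo_def hi_def by simp
    finally show ?thesis .
  qed
  have c2: "card D2 \<le> 1"
  proof -
    have "a = b" if a: "a \<in> D2" and b: "b \<in> D2" for a b
    proof (rule ccontr)
      assume "a \<noteq> b"
      then consider "a < b" | "b < a" by linarith
      then show False
      proof cases
        case 1
        then show False using sep_contra[OF rxy FE, of a b] a b px py
          unfolding D2_def sep_def hi_def by auto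
      next
        case 2
        then show False using sep_contra[OF rxy FE, of b a] a b px py
          unfolding D2_def sep_def hi_def by auto
      qed
    qed
    moreover have "finite D2" unfolding D2_def by auto
    ultimately show ?thesis by (simp add: card_le_Suc0_iff_eq)
  qed
  have c3: "card D3 \<le> 1"
  proof -
    have "a = b" if a: "a \<in> D3" and b: "b \<in> D3" for a b
    proof (rule ccontr)
      assume "a \<noteq> b"
      then consider "a < b" | "b < a" by linarith
      then show False
      proof cases
        case 1
        then show False using sep_contra[OF rxy FE, of b a] a b px py
          unfolding D3_def sep_def lo_def by (auto; arith)
      next
        case 2
        then show False using sep_contra[OF rxy FE, of a b] a b px py
          unfolding D3_def sep_def lo_def by (auto; arith)
      qed
    qed
    moreover have "finite D3" unfolding D3_def by auto
    ultimately show ?thesis by (simp add: card_le_Suc0_iff_eq)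
  qed
  have "card ({1..2*k} \<inter> D) \<le> card D" by (simp add: card_mono D_def D1_def D2_def D3_def)
  also have "\<dots> \<le> card D1 + card D2 + card D3" unfolding D_def
    by (metis add_le_mono card_Un_le le_refl order_trans)
  finally have "card ({1..2*k} \<inter> D) \<le> 5" using c1 c2 c3 by linarith
  then show ?thesis using P by linarith
qed

lemma rung_notin_TB: "1 \<le> m \<Longrightarrow> rung m \<notin> TB k"
  unfolding TB_def rung_def by (auto simp: doubleton_eq_iff; arith)

lemma Phi_TB: "Phi k (TB k) = 0"
  unfolding Phi_def tm_def using rung_notin_TB by simp

lemma rung_in_TA: "1 \<le> m \<Longrightarrow> m \<le> 2*k \<Longrightarrow> rung m \<in> TA k"
  unfolding TA_def rung_def
  by (rule CollectI, rule exI[of _ "2*m-1"]) auto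

lemma TA_cut:
  assumes "reach (TA k - {rung m}) 0 w" "1 \<le> m"
  shows "w \<le> 2*m - 1"
  using assms(1) unfolding reach_def
proof (induction rule: rtranclp_induct)
  case base then show ?case by simp
next
  case (step z c)
  then obtain i where i: "{z,c} = {i, i+1}" "{z,c} \<noteq> {2*m-1, 2*m}" unfolding TA_def rung_def by auto
  then show ?case using step.IH assms(2) by (auto simp: doubleton_eq_iff)
qed

lemma tm_TA: "1 \<le> m \<Longrightarrow> m \<le> 2*k \<Longrightarrow> tm k (TA k) m \<ge> 4*k + 1 - 2*m"
proof -
  assume m: "1 \<le> m" "m \<le> 2*k"
  have "{2*m..4*k} \<subseteq> {w \<in> Vk k. \<not> reach (TA k - {rung m}) 0 w}"
  proof
    fix w assume w: "w \<in> {2*m..4*k}"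
    have "\<not> reach (TA k - {rung m}) 0 w"
    proof
      assume "reach (TA k - {rung m}) 0 w"
      then have "w \<le> 2*m - 1" using TA_cut m(1) by blast
      then show False using w m(1) by auto
    qed
    then show "w \<in> {w \<in> Vk k. \<not> reach (TA k - {rung m}) 0 w}" using w unfolding Vk_def by auto
  qed
  then have "card {2*m..4*k} \<le> card {w \<in> Vk k. \<not> reach (TA k - {rung m}) 0 w}"
    by (intro card_mono) (auto simp: Vk_def)
  then show ?thesis unfolding tm_def using rung_in_TA[OF m] by simp
qed

lemma Phi_TA: "Phi k (TA k) \<ge> k * (2*k+1)"
proof -
  have "(\<Sum>m\<in>{1..k}. tm k (TA k) m) \<le> Phi k (TA k)"
    unfolding Phi_def by (rule sum_mono2) auto
  moreover have "(\<Sum>m\<in>{1..k}. 2*k+1) \<le> (\<Sum>m\<in>{1..k}. tm k (TA k) m)"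
  proof (rule sum_mono)
    fix m assume "m \<in> {1..k}"
    then show "2*k+1 \<le> tm k (TA k) m" using tm_TA[of m k] by auto
  qed
  ultimately show ?thesis by simp
qed

lemma seq_bound:
  assumes "reconf_seq k Ts"
  shows "Phi k (hd Ts) \<le> Phi k (last Ts) + 5 * (length Ts - 1)"
proof -
  have ne: "Ts \<noteq> []" and sp: "\<forall>T\<in>set Ts. spanning_tree (Vk k) (Ek k) T"
    and adj: "\<forall>i. Suc i < length Ts \<longrightarrow> adjacent_trees (Vk k) 0 (Ts ! i) (Ts ! Suc i)"
    using assms unfolding reconf_seq_def by auto
  have "i < length Ts \<Longrightarrow> Phi k (Ts ! 0) \<le> Phi k (Ts ! i) + 5 * i" for i
  proof (induction i)
    case 0 then show ?case by simp
  next
    case (Suc i)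
    have "Phi k (Ts ! i) \<le> Phi k (Ts ! Suc i) + 5"
      using step_bound[of k "Ts ! i" "Ts ! Suc i"] sp adj Suc.prems by auto
    then show ?case using Suc by simp
  qed
  from this[of "length Ts - 1"] ne show ?thesis
    by (simp add: hd_conv_nth last_conv_nth)
qed

theorem theorem2:
  shows "\<exists>c::real. c > 0 \<and>
    (\<forall>k\<ge>1. \<forall>Ts. reconf_seq k Ts \<longrightarrow> real (length Ts) \<ge> c * (real (4*k+1))^2)"
proof (intro exI[of _ "1/100"] conjI allI impI)
  fix k :: nat and Ts assume k: "k \<ge> 1" and r: "reconf_seq k Ts"
  have "hd Ts = TA k" "last Ts = TB k" "Ts \<noteq> []" using r unfolding reconf_seq_def by auto
  then have "k * (2*k+1) \<le> 5 * (length Ts - 1)" using seq_bound[OF r] Phi_TA[of k] Phi_TB[of k] by simp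
  moreover have L: "length Ts \<ge> 1" using \<open>Ts \<noteq> []\<close> by (simp add: Suc_le_eq)
  ultimately have "real (k * (2*k+1)) \<le> real (5 * (length Ts - 1))" by (simp only: of_nat_le_iff)
  then have h: "real k + real k * (2 * real k) \<le> 5 * real (length Ts) - 5"
    using L by (simp add: of_nat_diff)
  have h2: "2 * (real k * real k) + real k \<le> 5 * real (length Ts) - 5"
  proof -
    have "real k * (2 * real k) = 2 * (real k * real k)" by simp
    then show ?thesis using h by linarith
  qed
  have k1: "real k \<ge> 1" using k by simp
  have kk: "real k * 1 \<le> real k * real k" using k1 by (intro mult_left_mono) auto
  have "(real (4*k+1))^2 = 16 * (real k * real k) + 8 * real k + 1" by (simp add: power2_eq_square algebra_simps)
  then show "1/100 * (real (4*k+1))^2 \<le> real (length Ts)" using h2 kk k1 by linarith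
qed (simp)

end
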